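(* Let $\Sigma=\{\lambda\in\mathbb Z^3:\lambda_1+\lambda_2+\lambda_3=0\}$. Then $GL_3(F)=\bigcup_{\lambda\in\Sigma}K'F'^\times\lambda(\varpi)K$.
   Context: $F$ is a $p$-adic field with $p\ne2,3$, ring of integers $R$, uniformizer $\varpi$. $F'=F(\varpi')$ with $\varpi'^3=\varpi$, a totally ramified cubic extension with ring of integers $R'$, embedded in $M_3(F)$ via its regular representation on the $R$-basis $\{1,\varpi',\varpi'^2\}$ of $R'$, so that $\varpi'$ corresponds to the matrix with entries $1$ in positions $(2,1)$ and $(3,2)$, $\varpi$ in position $(1,3)$, and $0$ elsewhere; $F'^\times$ is thus a subgroup of $GL_3(F)$. $K=GL_3(R)$, and $K'$ is the lower triangular Iwahori subgroup, i.e. the elements of $K$ whose reduction mod $\varpi$ is lower triangular. $\lambda(\varpi)=\operatorname{diag}(\varpi^{\lambda_1},\varpi^{\lambda_2},\varpi^{\lambda_3})$. *)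

theory Defs
  imports "HOL-Analysis.Analysis"
begin

text \<open>A (normalised) discrete valuation on a field is given by a function
  v :: 'a => int whose values at nonzero elements matter (the value at 0
  is irrelevant and never used; 0 is treated as having valuation +infinity).\<close>

definition discrete_valuation :: "('a::field \<Rightarrow> int) \<Rightarrow> bool" where
  "discrete_valuation v \<longleftrightarrow>
     (\<forall>x y. x \<noteq> 0 \<longrightarrow> y \<noteq> 0 \<longrightarrow> v (x * y) = v x + v y) \<and>
     (\<forall>x y. x \<noteq> 0 \<longrightarrow> y \<noteq> 0 \<longrightarrow> x + y \<noteq> 0 \<longrightarrow> v (x + y) \<ge> min (v x) (v y)) \<and>
     (\<exists>x. x \<noteq> 0 \<and> v x = 1)"

definition val_ring :: "('a::field \<Rightarrow> int) \<Rightarrow> 'a set" where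
  "val_ring v = {x. x = 0 \<or> 0 \<le> v x}"

definition val_ideal :: "('a::field \<Rightarrow> int) \<Rightarrow> 'a set" where
  "val_ideal v = {x. x = 0 \<or> 1 \<le> v x}"

definition residue_field :: "('a::field \<Rightarrow> int) \<Rightarrow> 'a set set" where
  "residue_field v = val_ring v // {(x, y). x \<in> val_ring v \<and> y \<in> val_ring v \<and> x - y \<in> val_ideal v}"

definition val_cauchy :: "('a::field \<Rightarrow> int) \<Rightarrow> (nat \<Rightarrow> 'a) \<Rightarrow> bool" where
  "val_cauchy v x \<longleftrightarrow> (\<forall>N::int. \<exists>M. \<forall>m\<ge>M. \<forall>n\<ge>M. x m = x n \<or> v (x m - x n) \<ge> N)"

definition val_converges :: "('a::field \<Rightarrow> int) \<Rightarrow> (nat \<Rightarrow> 'a) \<Rightarrow> 'a \<Rightarrow> bool" where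
  "val_converges v x L \<longleftrightarrow> (\<forall>N::int. \<exists>M. \<forall>n\<ge>M. x n = L \<or> v (x n - L) \<ge> N)"

definition val_complete :: "('a::field \<Rightarrow> int) \<Rightarrow> bool" where
  "val_complete v \<longleftrightarrow> (\<forall>x. val_cauchy v x \<longrightarrow> (\<exists>L. val_converges v x L))"

text \<open>A p-adic field (finite extension of Q_p) is the same as a field of
  characteristic 0, complete for a discrete valuation, with finite residue
  field of characteristic p.\<close>
definition p_adic_field :: "('a::field_char_0 \<Rightarrow> int) \<Rightarrow> nat \<Rightarrow> bool" where
  "p_adic_field v p \<longleftrightarrow> discrete_valuation v \<and> val_complete v \<and>
     finite (residue_field v) \<and> prime p \<and> of_nat p \<in> val_ideal v"

definition uniformizer :: "('a::field \<Rightarrow> int) \<Rightarrow> 'a \<Rightarrow> bool" where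
  "uniformizer v w \<longleftrightarrow> w \<noteq> 0 \<and> v w = 1"

text \<open>3x3 matrices are indexed by the type 3, whose elements are written
  1, 2, 3 (here 3 = 0 in the numeral type, but 1,2,3 are distinct).\<close>

type_synonym 'a mat3 = "'a ^ 3 ^ 3"

definition GL3 :: "'a::field mat3 set" where
  "GL3 = {g. invertible g}"

definition Kmax :: "('a::field \<Rightarrow> int) \<Rightarrow> 'a mat3 set" where
  "Kmax v = {g. invertible g \<and> (\<forall>i j. g $ i $ j \<in> val_ring v)
                 \<and> (\<forall>i j. matrix_inv g $ i $ j \<in> val_ring v)}"

text \<open>K' = lower triangular Iwahori: elements of K whose reduction mod varpi
  is lower triangular, i.e. entries strictly above the diagonal lie in (varpi).\<close>
definition Iwahori :: "('a::field \<Rightarrow> int) \<Rightarrow> 'a mat3 set" where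
  "Iwahori v = {g \<in> Kmax v. g $ 1 $ 2 \<in> val_ideal v \<and> g $ 1 $ 3 \<in> val_ideal v
                               \<and> g $ 2 $ 3 \<in> val_ideal v}"

text \<open>The matrix of multiplication by varpi' = varpi^(1/3) on the basis
  1, varpi', varpi'^2: entries 1 at (2,1), (3,2), varpi at (1,3), 0 elsewhere.\<close>
definition varpi'_mat :: "'a::field \<Rightarrow> 'a mat3" where
  "varpi'_mat w = (\<chi> i j. if i = 2 \<and> j = 1 then 1
                          else if i = 3 \<and> j = 2 then 1
                          else if i = 1 \<and> j = 3 then w else 0)"

text \<open>F'^x embedded in GL_3(F): images a + b varpi' + c varpi'^2, not all zero.\<close>
definition F'_units :: "'a::field \<Rightarrow> 'a mat3 set" where
  "F'_units w =
     {(\<chi> i j. a * mat 1 $ i $ j + b * varpi'_mat w $ i $ j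
               + c * (varpi'_mat w ** varpi'_mat w) $ i $ j) | a b c.
        \<not> (a = 0 \<and> b = 0 \<and> c = 0)}"

definition lam_mat :: "'a::field \<Rightarrow> int \<times> int \<times> int \<Rightarrow> 'a mat3" where
  "lam_mat w lam = (case lam of (l1, l2, l3) \<Rightarrow>
     (\<chi> i j. if i = j then (if i = 1 then w powi l1 else if i = 2 then w powi l2 else w powi l3)
             else 0))"

definition Sigma0 :: "(int \<times> int \<times> int) set" where
  "Sigma0 = {(l1, l2, l3). l1 + l2 + l3 = 0}"

end

theory Submission
  imports Defs "HOL-Computational_Algebra.Primes"
begin

section \<open>Elementary matrices\<close>

definition Lmat :: "3 \<Rightarrow> (3 \<Rightarrow> 'b::field) \<Rightarrow> 'b mat3" where
  "Lmat i0 c = (\<chi> a b. if a = b then 1 else if b = i0 then c a else 0)"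

definition Mmat :: "3 \<Rightarrow> (3 \<Rightarrow> 'b::field) \<Rightarrow> 'b mat3" where
  "Mmat j0 d = (\<chi> a b. if a = b then 1 else if a = j0 then d b else 0)"

lemma mm_entry0: "((A::'b::comm_ring_1 mat3) ** B) $ i $ j = A$i$1 * B$1$j + A$i$2 * B$2$j + A$i$3 * B$3$j"
  by (simp add: matrix_matrix_mult_def sum_3)

lemma three_distinct: "(1::3) \<noteq> 2" "(1::3) \<noteq> 3" "(2::3) \<noteq> 3" "(2::3) \<noteq> 1" "(3::3) \<noteq> 1" "(3::3) \<noteq> 2"
  by simp_all

lemma Lmat_inv: "Lmat i0 c ** Lmat i0 (\<lambda>a. - c a) = mat 1"
  using exhaust_3[of i0] by (auto simp: vec_eq_iff forall_3 mm_entry0 mat_def Lmat_def)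

lemma Mmat_inv: "Mmat j0 d ** Mmat j0 (\<lambda>a. - d a) = mat 1"
  using exhaust_3[of j0] by (auto simp: vec_eq_iff forall_3 mm_entry0 mat_def Mmat_def)

lemma Lmat_entry: "(Lmat i0 c ** (A::'b::field mat3)) $ a $ b = A $ a $ b + (if a \<noteq> i0 then c a * A $ i0 $ b else 0)"
  using exhaust_3[of i0] exhaust_3[of a] by (auto simp: mm_entry0 Lmat_def)

lemma Mmat_entry: "((A::'b::field mat3) ** Mmat j0 d) $ a $ b = A $ a $ b + (if b \<noteq> j0 then A $ a $ j0 * d b else 0)"
  using exhaust_3[of j0] exhaust_3[of b] by (auto simp: mm_entry0 Mmat_def)

definition idx :: "3 \<Rightarrow> int" where
  "idx i = (if i = 1 then 1 else if i = 2 then 2 else 3)"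

lemma idx_bounds: "1 \<le> idx i \<and> idx i \<le> 3"
  unfolding idx_def by auto

definition clean :: "(3 \<times> 3) set \<Rightarrow> 'b::field mat3 \<Rightarrow> bool" where
  "clean P A \<longleftrightarrow> (\<forall>(i, j) \<in> P. A $ i $ j \<noteq> 0 \<and> (\<forall>j'. j' \<noteq> j \<longrightarrow> A $ i $ j' = 0)
                                 \<and> (\<forall>i'. i' \<noteq> i \<longrightarrow> A $ i' $ j = 0))"

lemma row_nz:
  assumes "invertible (A::'b::field mat3)"
  shows "\<exists>j. A $ i $ j \<noteq> 0"
proof (rule ccontr)
  assume "\<not> (\<exists>j. A $ i $ j \<noteq> 0)"
  then have z: "\<And>j. A $ i $ j = 0" by blast
  obtain B where "A ** B = mat 1" using assms unfolding invertible_def by blast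
  then have "(A ** B) $ i $ i = 1" by (simp add: mat_def)
  moreover have "(A ** B) $ i $ i = 0" by (simp add: mm_entry0 z)
  ultimately show False by simp
qed

section \<open>Valuation basics\<close>

context
  fixes v :: "'a::field \<Rightarrow> int"
  assumes dv: "discrete_valuation v"
begin

lemma v_mult: "x \<noteq> 0 \<Longrightarrow> y \<noteq> 0 \<Longrightarrow> v (x * y) = v x + v y"
  using dv unfolding discrete_valuation_def by blast

lemma v_add: "x \<noteq> 0 \<Longrightarrow> y \<noteq> 0 \<Longrightarrow> x + y \<noteq> 0 \<Longrightarrow> v (x + y) \<ge> min (v x) (v y)"
  using dv unfolding discrete_valuation_def by blast

lemma v_one: "v 1 = 0"
  using v_mult[of 1 1] by simp

lemma v_minus_one: "v (-1) = 0"
  using v_mult[of "-1" "-1"] v_one by simp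

lemma v_minus: "x \<noteq> 0 \<Longrightarrow> v (- x) = v x"
  using v_mult[of "-1" x] v_minus_one by simp

lemma v_inverse: "x \<noteq> 0 \<Longrightarrow> v (inverse x) = - v x"
  using v_mult[of x "inverse x"] v_one by simp

lemma v_divide: "x \<noteq> 0 \<Longrightarrow> y \<noteq> 0 \<Longrightarrow> v (x / y) = v x - v y"
  by (simp add: divide_inverse v_mult v_inverse)

lemma v_add_ge: "x + y \<noteq> 0 \<Longrightarrow> (x = 0 \<or> n \<le> v x) \<Longrightarrow> (y = 0 \<or> n \<le> v y) \<Longrightarrow> n \<le> v (x + y)"
  using v_add[of x y] by fastforce

lemma v_strict:
  assumes "x \<noteq> 0" "y = 0 \<or> v x < v y"
  shows "x + y \<noteq> 0 \<and> v (x + y) = v x"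
proof (cases "y = 0")
  case True then show ?thesis using assms by simp
next
  case False
  then have lt: "v x < v y" using assms by simp
  have ne: "x + y \<noteq> 0"
  proof
    assume "x + y = 0"
    then have "y = - x" by (metis add.commute add_eq_0_iff)
    then show False using lt v_minus assms by simp
  qed
  have ge: "v (x + y) \<ge> v x" using v_add[OF assms(1) False ne] lt by simp
  have "x = (x + y) + (- y)" by simp
  then have "v x \<ge> min (v (x + y)) (v (- y))"
    using v_add[OF ne, of "- y"] False assms(1) by (metis neg_equal_0_iff_equal)
  then have "v (x + y) \<le> v x" using lt v_minus[OF False] by simp
  then show ?thesis using ne ge by simp
qed

lemma R_add: "x \<in> val_ring v \<Longrightarrow> y \<in> val_ring v \<Longrightarrow> x + y \<in> val_ring v"
  unfolding val_ring_def using v_add_ge[of x y 0] by auto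

lemma R_mult: "x \<in> val_ring v \<Longrightarrow> y \<in> val_ring v \<Longrightarrow> x * y \<in> val_ring v"
  unfolding val_ring_def by (cases "x = 0"; cases "y = 0") (auto simp: v_mult)

lemma R_minus: "x \<in> val_ring v \<Longrightarrow> - x \<in> val_ring v"
  unfolding val_ring_def by (cases "x = 0") (auto simp: v_minus)

lemma R_0: "0 \<in> val_ring v" and R_1: "1 \<in> val_ring v"
  unfolding val_ring_def using v_one by auto

lemma I_add: "x \<in> val_ideal v \<Longrightarrow> y \<in> val_ideal v \<Longrightarrow> x + y \<in> val_ideal v"
  unfolding val_ideal_def using v_add_ge[of x y 1] by auto

lemma I_mult: "x \<in> val_ring v \<Longrightarrow> y \<in> val_ideal v \<Longrightarrow> x * y \<in> val_ideal v"
  unfolding val_ring_def val_ideal_def by (cases "x = 0"; cases "y = 0") (auto simp: v_mult)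

lemma I_mult2: "x \<in> val_ideal v \<Longrightarrow> y \<in> val_ring v \<Longrightarrow> x * y \<in> val_ideal v"
  using I_mult[of y x] by (simp add: mult.commute)

lemma I_R: "x \<in> val_ideal v \<Longrightarrow> x \<in> val_ring v"
  unfolding val_ring_def val_ideal_def by auto

lemma I_0: "0 \<in> val_ideal v"
  unfolding val_ideal_def by auto

lemma R_of_nat: "of_nat n \<in> val_ring v"
  by (induction n) (auto intro: R_add R_0 R_1)

lemma R_of_int: "of_int n \<in> val_ring v"
proof (cases "n \<ge> 0")
  case True then show ?thesis using R_of_nat[of "nat n"] by simp
next
  case False
  then have "of_int n = - (of_nat (nat (- n)) :: 'a)" by simp
  then show ?thesis using R_minus[OF R_of_nat[of "nat (- n)"]] by simp
qed


lemma mm_entry: "((A::'b::comm_ring_1 mat3) ** B) $ i $ j = A$i$1 * B$1$j + A$i$2 * B$2$j + A$i$3 * B$3$j"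
  by (simp add: matrix_matrix_mult_def sum_3)

lemma R_mm: "(\<forall>i j. A $ i $ j \<in> val_ring v) \<Longrightarrow> (\<forall>i j. B $ i $ j \<in> val_ring v)
   \<Longrightarrow> ((A::'a mat3) ** B) $ i $ j \<in> val_ring v"
  unfolding mm_entry by (intro R_add R_mult) auto

lemma inv_unique:
  fixes A B :: "'b::field mat3"
  assumes "A ** B = mat 1"
  shows "invertible A \<and> matrix_inv A = B"
proof -
  have BA: "B ** A = mat 1" using assms matrix_left_right_inverse by blast
  have inv: "invertible A" unfolding invertible_def using assms BA by blast
  have "A ** matrix_inv A = mat 1 \<and> matrix_inv A ** A = mat 1"
    unfolding matrix_inv_def by (rule someI[of _ B]) (use assms BA in blast)
  then have "matrix_inv A = matrix_inv A ** (A ** B)" using assms by simp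
  also have "\<dots> = B" using \<open>A ** matrix_inv A = mat 1 \<and> matrix_inv A ** A = mat 1\<close>
    by (simp add: matrix_mul_assoc)
  finally show ?thesis using inv by simp
qed

lemma Kmax_intro:
  assumes "A ** B = mat 1" "\<forall>i j. A $ i $ j \<in> val_ring v" "\<forall>i j. B $ i $ j \<in> val_ring v"
  shows "A \<in> Kmax v"
  using inv_unique[OF assms(1)] assms unfolding Kmax_def by auto

lemma Iw_intro:
  assumes "A ** B = mat 1" "\<forall>i j. A $ i $ j \<in> val_ring v" "\<forall>i j. B $ i $ j \<in> val_ring v"
    "A $ 1 $ 2 \<in> val_ideal v" "A $ 1 $ 3 \<in> val_ideal v" "A $ 2 $ 3 \<in> val_ideal v"
  shows "A \<in> Iwahori v"
  using Kmax_intro[OF assms(1-3)] assms unfolding Iwahori_def by auto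

lemma Kmax_mult:
  assumes "A \<in> Kmax v" "B \<in> Kmax v"
  shows "A ** B \<in> Kmax v"
proof -
  have iA: "A ** matrix_inv A = mat 1" and iB: "B ** matrix_inv B = mat 1"
    using assms unfolding Kmax_def invertible_def matrix_inv_def by (auto intro: someI2_ex)
  have "(A ** B) ** (matrix_inv B ** matrix_inv A) = mat 1"
    by (metis iA iB matrix_mul_assoc matrix_mul_rid)
  then show ?thesis
    by (rule Kmax_intro) (use assms in \<open>auto simp: Kmax_def intro!: R_mm\<close>)
qed

lemma Iw_mult:
  assumes "A \<in> Iwahori v" "B \<in> Iwahori v"
  shows "A ** B \<in> Iwahori v"
proof -
  have K: "A ** B \<in> Kmax v" using assms Kmax_mult unfolding Iwahori_def by auto
  have RA: "\<forall>i j. A $ i $ j \<in> val_ring v" and RB: "\<forall>i j. B $ i $ j \<in> val_ring v"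
    using assms unfolding Iwahori_def Kmax_def by auto
  have IA: "A $ 1 $ 2 \<in> val_ideal v" "A $ 1 $ 3 \<in> val_ideal v" "A $ 2 $ 3 \<in> val_ideal v"
    and IB: "B $ 1 $ 2 \<in> val_ideal v" "B $ 1 $ 3 \<in> val_ideal v" "B $ 2 $ 3 \<in> val_ideal v"
    using assms unfolding Iwahori_def by auto
  have "(A ** B) $ 1 $ 2 \<in> val_ideal v" "(A ** B) $ 1 $ 3 \<in> val_ideal v" "(A ** B) $ 2 $ 3 \<in> val_ideal v"
    unfolding mm_entry using RA RB IA IB by (intro I_add; blast intro: I_mult I_mult2)+
  then show ?thesis using K unfolding Iwahori_def by auto
qed

lemma Iw_Kmax: "A \<in> Iwahori v \<Longrightarrow> A \<in> Kmax v"
  unfolding Iwahori_def by auto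


lemma I_minus: "x \<in> val_ideal v \<Longrightarrow> - x \<in> val_ideal v"
  unfolding val_ideal_def by (cases "x = 0") (auto simp: v_minus)

lemma Lmat_Iw:
  assumes "\<forall>a. c a \<in> val_ring v" "\<forall>a. idx a < idx i0 \<longrightarrow> c a \<in> val_ideal v"
  shows "Lmat i0 c \<in> Iwahori v"
proof (rule Iw_intro[OF Lmat_inv])
  show "\<forall>i j. Lmat i0 c $ i $ j \<in> val_ring v" using assms(1) by (simp add: Lmat_def R_0 R_1)
  show "\<forall>i j. Lmat i0 (\<lambda>a. - c a) $ i $ j \<in> val_ring v" using assms(1) by (simp add: Lmat_def R_0 R_1 R_minus)
  show "Lmat i0 c $ 1 $ 2 \<in> val_ideal v" "Lmat i0 c $ 1 $ 3 \<in> val_ideal v" "Lmat i0 c $ 2 $ 3 \<in> val_ideal v"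
    using assms(2) exhaust_3[of i0] by (auto simp: Lmat_def I_0 idx_def)
qed

lemma Mmat_K:
  assumes "\<forall>b. d b \<in> val_ring v"
  shows "Mmat j0 d \<in> Kmax v"
proof (rule Kmax_intro[OF Mmat_inv])
  show "\<forall>i j. Mmat j0 d $ i $ j \<in> val_ring v" using assms(1) by (simp add: Mmat_def R_0 R_1)
  show "\<forall>i j. Mmat j0 (\<lambda>a. - d a) $ i $ j \<in> val_ring v" using assms(1) by (simp add: Mmat_def R_0 R_1 R_minus)
qed

lemma step:
  assumes inv: "invertible (A::'a mat3)" and cl: "clean P A" and i1: "i1 \<notin> fst ` P"
  shows "\<exists>L M A' i0 j0. L \<in> Iwahori v \<and> M \<in> Kmax v \<and> A = L ** A' ** M \<and> invertible A'
            \<and> clean (insert (i0, j0) P) A' \<and> i0 \<notin> fst ` P"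
proof -
  define S where "S = {(i, j). i \<notin> fst ` P \<and> A $ i $ j \<noteq> 0}"
  define wt where "wt = (\<lambda>(i, j). 3 * v (A $ i $ j) + idx i)"
  have finS: "finite S" by simp
  obtain j1 where "A $ i1 $ j1 \<noteq> 0" using row_nz[OF inv] by blast
  then have Sne: "S \<noteq> {}" using i1 unfolding S_def by blast
  have "Min (wt ` S) \<in> wt ` S" using finS Sne by simp
  then obtain i0 j0 where s0: "(i0, j0) \<in> S" "wt (i0, j0) = Min (wt ` S)" by auto
  have minS: "\<And>s. s \<in> S \<Longrightarrow> wt (i0, j0) \<le> wt s" using s0(2) finS by simp
  define p where "p = A $ i0 $ j0"
  have p0: "p \<noteq> 0" and i0P: "i0 \<notin> fst ` P" using s0 unfolding S_def p_def by auto
  have colz: "A $ a $ j0 = 0" if aP: "a \<in> fst ` P" for a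
  proof -
    obtain j where aj: "(a, j) \<in> P" using aP by force
    have "a \<noteq> i0" using aP i0P by blast
    have "j \<noteq> j0"
    proof
      assume "j = j0"
      then have "A $ i0 $ j0 = 0" using cl aj \<open>a \<noteq> i0\<close> unfolding clean_def by fastforce
      then show False using p0 p_def by simp
    qed
    then show ?thesis using cl aj unfolding clean_def by fastforce
  qed
  have j0P: "(i, j0) \<notin> P" for i
  proof
    assume "(i, j0) \<in> P"
    moreover then have "i \<noteq> i0" using i0P by force
    ultimately have "A $ i0 $ j0 = 0" using cl unfolding clean_def by fastforce
    then show False using p0 p_def by simp
  qed
  have rowz: "A $ i0 $ b = 0" if ibP: "(i, b) \<in> P" for i b
  proof -
    have "i \<noteq> i0" using ibP i0P by force
    then show ?thesis using cl ibP unfolding clean_def by fastforce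
  qed
  define c where "c = (\<lambda>a. - A $ a $ j0 / p)"
  define d where "d = (\<lambda>b. - A $ i0 $ b / p)"
  have cR: "c a \<in> val_ring v \<and> (idx a < idx i0 \<longrightarrow> c a \<in> val_ideal v)" for a
  proof (cases "A $ a $ j0 = 0")
    case True then show ?thesis by (simp add: c_def val_ring_def val_ideal_def)
  next
    case False
    then have "a \<notin> fst ` P" using colz by blast
    then have "(a, j0) \<in> S" using False unfolding S_def by blast
    then have "wt (i0, j0) \<le> wt (a, j0)" by (rule minS)
    then have ineq: "3 * v p + idx i0 \<le> 3 * v (A $ a $ j0) + idx a" unfolding wt_def p_def by simp
    have vc: "v (c a) = v (A $ a $ j0) - v p" unfolding c_def
      using False p0 by (simp add: v_minus v_divide)
    have c0: "c a \<noteq> 0" unfolding c_def using False p0 by simp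
    show ?thesis using ineq vc c0 idx_bounds[of a] idx_bounds[of i0]
      unfolding val_ring_def val_ideal_def by auto
  qed
  have dR: "d b \<in> val_ring v" for b
  proof (cases "A $ i0 $ b = 0")
    case True then show ?thesis by (simp add: d_def val_ring_def)
  next
    case False
    then have "(i0, b) \<in> S" using i0P unfolding S_def by blast
    then have "wt (i0, j0) \<le> wt (i0, b)" by (rule minS)
    then have ineq: "3 * v p \<le> 3 * v (A $ i0 $ b)" unfolding wt_def p_def by simp
    have vd: "v (d b) = v (A $ i0 $ b) - v p" unfolding d_def
      using False p0 by (simp add: v_minus v_divide)
    show ?thesis using ineq vd unfolding val_ring_def by auto
  qed
  define A' where "A' = Lmat i0 c ** A ** Mmat j0 d"
  have A'e: "A' $ a $ b = (if a = i0 then (if b = j0 then p else 0) else A $ a $ b - A $ a $ j0 * A $ i0 $ b / p)" for a b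
    unfolding A'_def Mmat_entry Lmat_entry c_def d_def using p0 p_def by (auto simp: field_simps)
  have LL: "Lmat i0 (\<lambda>a. - c a) ** Lmat i0 c = mat 1" using Lmat_inv[of i0 "\<lambda>a. - c a"] by simp
  have MM: "Mmat j0 d ** Mmat j0 (\<lambda>a. - d a) = mat 1" by (rule Mmat_inv)
  have backeq: "A = Lmat i0 (\<lambda>a. - c a) ** A' ** Mmat j0 (\<lambda>a. - d a)"
    unfolding A'_def by (simp add: matrix_mul_assoc LL) (simp add: matrix_mul_assoc[symmetric] MM)
  have LI: "Lmat i0 (\<lambda>a. - c a) \<in> Iwahori v" using cR by (intro Lmat_Iw) (auto intro: R_minus I_minus)
  have MK: "Mmat j0 (\<lambda>a. - d a) \<in> Kmax v" using dR by (intro Mmat_K) (auto intro: R_minus)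
  have invA': "invertible A'" unfolding A'_def
    using inv_unique[OF Lmat_inv] inv_unique[OF Mmat_inv] inv by (intro invertible_mult) auto
  have clA': "clean (insert (i0, j0) P) A'"
    unfolding clean_def
  proof
    fix x assume "x \<in> insert (i0, j0) P"
    then show "case x of (i, j) \<Rightarrow> A' $ i $ j \<noteq> 0 \<and> (\<forall>j'. j' \<noteq> j \<longrightarrow> A' $ i $ j' = 0) \<and> (\<forall>i'. i' \<noteq> i \<longrightarrow> A' $ i' $ j = 0)"
    proof
      assume "x = (i0, j0)"
      then show ?thesis using p0 by (auto simp: A'e p_def)
    next
      assume xP: "x \<in> P"
      obtain i j where x: "x = (i, j)" by force
      have ii0: "i \<noteq> i0" using xP x i0P by force
      have jj0: "j \<noteq> j0" using xP x j0P by blast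
      have Aij0: "A $ i $ j0 = 0" using colz xP x by force
      have "A $ i $ j \<noteq> 0 \<and> (\<forall>j'. j' \<noteq> j \<longrightarrow> A $ i $ j' = 0) \<and> (\<forall>i'. i' \<noteq> i \<longrightarrow> A $ i' $ j = 0)"
        using cl xP x unfolding clean_def by fastforce
      moreover have "A $ i0 $ j = 0" using rowz xP x by blast
      ultimately show ?thesis using x ii0 jj0 Aij0 by (auto simp: A'e)
    qed
  qed
  show ?thesis using LI MK backeq invA' clA' i0P by blast
qed


lemma mat1_Iw: "mat 1 \<in> Iwahori v"
  by (rule Iw_intro[OF matrix_mul_lid[of "mat 1"]]) (auto simp: mat_def R_0 R_1 I_0)

lemma reduce:
  assumes "invertible (A::'a mat3)" "clean P A"
  shows "\<exists>k1 A' k2 P'. k1 \<in> Iwahori v \<and> k2 \<in> Kmax v \<and> A = k1 ** A' ** k2 \<and> clean P' A' \<and> fst ` P' = UNIV"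
  using assms
proof (induction "card (UNIV - fst ` P)" arbitrary: A P rule: less_induct)
  case less
  show ?case
  proof (cases "fst ` P = UNIV")
    case True
    then show ?thesis using less.prems mat1_Iw Iw_Kmax[OF mat1_Iw] by (intro exI[of _ "mat 1"] exI[of _ A] exI[of _ P]) auto
  next
    case False
    then obtain i1 where "i1 \<notin> fst ` P" by blast
    from step[OF less.prems this] obtain L M A' i0 j0 where
      st: "L \<in> Iwahori v" "M \<in> Kmax v" "A = L ** A' ** M" "invertible A'"
          "clean (insert (i0, j0) P) A'" "i0 \<notin> fst ` P" by blast
    have "UNIV - fst ` insert (i0, j0) P \<subset> UNIV - fst ` P" using st(6) by auto
    then have "card (UNIV - fst ` insert (i0, j0) P) < card (UNIV - fst ` P)"
      by (intro psubset_card_mono) auto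
    from less.hyps[OF this st(4) st(5)] obtain k1 A'' k2 P' where
      ih: "k1 \<in> Iwahori v" "k2 \<in> Kmax v" "A' = k1 ** A'' ** k2" "clean P' A''" "fst ` P' = UNIV" by blast
    have "A = (L ** k1) ** A'' ** (k2 ** M)" using st(3) ih(3) by (simp add: matrix_mul_assoc)
    then show ?thesis using Iw_mult[OF st(1) ih(1)] Kmax_mult[OF ih(2) st(2)] ih(4,5) by blast
  qed
qed

lemma clean_full_mono:
  assumes "clean P (A::'b::field mat3)" "fst ` P = UNIV"
  shows "\<exists>\<sigma>. inj \<sigma> \<and> (\<forall>i j. A $ i $ j \<noteq> 0 \<longleftrightarrow> j = \<sigma> i)"
proof -
  define \<sigma> where "\<sigma> i = (SOME j. (i, j) \<in> P)" for i
  have inP: "(i, \<sigma> i) \<in> P" for i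
  proof -
    have "i \<in> fst ` P" using assms(2) by simp
    then obtain j where "(i, j) \<in> P" by force
    then show ?thesis unfolding \<sigma>_def by (rule someI)
  qed
  have nz: "A $ i $ j \<noteq> 0 \<longleftrightarrow> j = \<sigma> i" for i j
    using assms(1) inP[of i] unfolding clean_def by fastforce
  have "inj \<sigma>"
  proof (rule injI)
    fix x y assume eq: "\<sigma> x = \<sigma> y"
    show "x = y"
    proof (rule ccontr)
      assume "x \<noteq> y"
      then have "A $ x $ \<sigma> y = 0" using assms(1) inP[of y] unfolding clean_def by fastforce
      moreover have "A $ x $ \<sigma> x \<noteq> 0" using nz by simp
      ultimately show False using eq by simp
    qed
  qed
  then show ?thesis using nz by blast
qed


lemma diag_mult_entry: "((\<chi> a b. if a = b then u a else 0) ** (M::'b::field mat3)) $ a $ b = u a * M $ a $ b"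
  using exhaust_3[of a] by (auto simp: mm_entry0)

lemma mono_compare:
  fixes A B :: "'a mat3"
  assumes iA: "inj \<sigma>A" and iB: "inj \<sigma>B"
    and nzA: "\<forall>i j. A $ i $ j \<noteq> 0 \<longleftrightarrow> j = \<sigma>A i"
    and nzB: "\<forall>i j. B $ i $ j \<noteq> 0 \<longleftrightarrow> j = \<sigma>B i"
    and vv: "\<forall>i. v (A $ i $ \<sigma>A i) = v (B $ i $ \<sigma>B i)"
  shows "\<exists>k1 k2. k1 \<in> Iwahori v \<and> k2 \<in> Kmax v \<and> A = k1 ** B ** k2"
proof -
  have sB: "surj \<sigma>B" using iB finite_UNIV_inj_surj[of \<sigma>B] by simp
  define \<tau> where "\<tau> = \<sigma>A \<circ> inv \<sigma>B"
  have itau: "\<tau> c = \<tau> c' \<longleftrightarrow> c = c'" for c c'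
  proof
    assume "\<tau> c = \<tau> c'"
    then have "inv \<sigma>B c = inv \<sigma>B c'" using iA unfolding \<tau>_def by (simp add: inj_eq)
    then have "\<sigma>B (inv \<sigma>B c) = \<sigma>B (inv \<sigma>B c')" by simp
    then show "c = c'" using sB by (simp add: surj_f_inv_f)
  qed simp
  define u where "u a = A $ a $ \<sigma>A a / B $ a $ \<sigma>B a" for a
  have Anz: "A $ a $ \<sigma>A a \<noteq> 0" and Bnz: "B $ a $ \<sigma>B a \<noteq> 0" for a using nzA nzB by auto
  have u0: "u a \<noteq> 0" for a using Anz Bnz unfolding u_def by simp
  have vu: "v (u a) = 0" for a using Anz Bnz vv unfolding u_def by (simp add: v_divide)
  have vu': "v (1 / u a) = 0" for a using u0 vu by (simp add: v_inverse divide_inverse)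
  define k1 where "k1 = (\<chi> a b. if a = b then u a else (0::'a))"
  define k1' where "k1' = (\<chi> a b. if a = b then 1 / u a else (0::'a))"
  have k1I: "k1 \<in> Iwahori v"
  proof (rule Iw_intro[of _ k1'])
    show "k1 ** k1' = mat 1" unfolding k1_def k1'_def
      by (simp add: vec_eq_iff diag_mult_entry mat_def u0)
    show "\<forall>i j. k1 $ i $ j \<in> val_ring v" unfolding k1_def using vu by (simp add: val_ring_def)
    show "\<forall>i j. k1' $ i $ j \<in> val_ring v" unfolding k1'_def using vu' by (simp add: val_ring_def)
    show "k1 $ 1 $ 2 \<in> val_ideal v" "k1 $ 1 $ 3 \<in> val_ideal v" "k1 $ 2 $ 3 \<in> val_ideal v"
      unfolding k1_def by (simp_all add: I_0)
  qed
  define k2 where "k2 = (\<chi> c b. if b = \<tau> c then 1 else (0::'a))"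
  define k2' where "k2' = (\<chi> b c. if b = \<tau> c then 1 else (0::'a))"
  have k2K: "k2 \<in> Kmax v"
  proof (rule Kmax_intro[of _ k2'])
    have "(k2 ** k2') $ c $ c' = (if c = c' then 1 else 0)" for c c'
    proof -
      have "(k2 ** k2') $ c $ c' = (\<Sum>b\<in>UNIV. if b = \<tau> c then (if b = \<tau> c' then 1 else 0) else 0)"
        unfolding k2_def k2'_def matrix_matrix_mult_def vec_lambda_beta by (rule sum.cong) simp_all
      also have "\<dots> = (if \<tau> c = \<tau> c' then 1 else 0)" by simp
      finally show ?thesis using itau by simp
    qed
    then show "k2 ** k2' = mat 1" by (simp add: vec_eq_iff mat_def)
    show "\<forall>i j. k2 $ i $ j \<in> val_ring v" unfolding k2_def by (simp add: R_0 R_1)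
    show "\<forall>i j. k2' $ i $ j \<in> val_ring v" unfolding k2'_def by (simp add: R_0 R_1)
  qed
  have "(k1 ** B ** k2) $ a $ b = A $ a $ b" for a b
  proof -
    have "(B ** k2) $ a $ b = (\<Sum>c\<in>UNIV. if c = \<sigma>B a then B $ a $ \<sigma>B a * k2 $ c $ b else 0)"
      unfolding matrix_matrix_mult_def vec_lambda_beta
    proof (rule sum.cong)
      fix c
      show "B $ a $ c * k2 $ c $ b = (if c = \<sigma>B a then B $ a $ \<sigma>B a * k2 $ c $ b else 0)"
      proof (cases "c = \<sigma>B a")
        case False
        then have "B $ a $ c = 0" using nzB by blast
        then show ?thesis using False by simp
      qed simp
    qed simp
    also have "\<dots> = B $ a $ \<sigma>B a * (if b = \<sigma>A a then 1 else 0)"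
      using iB unfolding k2_def \<tau>_def by simp
    finally have "(B ** k2) $ a $ b = B $ a $ \<sigma>B a * (if b = \<sigma>A a then 1 else 0)" .
    then have "(k1 ** B ** k2) $ a $ b = u a * (B $ a $ \<sigma>B a * (if b = \<sigma>A a then 1 else 0))"
      unfolding k1_def by (simp add: matrix_mul_assoc[symmetric] diag_mult_entry)
    also have "\<dots> = A $ a $ b"
    proof (cases "b = \<sigma>A a")
      case True then show ?thesis using Bnz[of a] unfolding u_def by simp
    next
      case False
      then have "A $ a $ b = 0" using nzA by blast
      then show ?thesis using False by simp
    qed
    finally show ?thesis .
  qed
  then have "A = k1 ** B ** k2" by (simp add: vec_eq_iff)
  then show ?thesis using k1I k2K by blast
qed


lemma v_power: "x \<noteq> 0 \<Longrightarrow> v (x ^ n) = int n * v x"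
  by (induction n) (auto simp: v_one v_mult algebra_simps)

lemma v_powi: "w \<noteq> 0 \<Longrightarrow> v w = 1 \<Longrightarrow> v (w powi n) = n"
  by (cases "n \<ge> 0") (auto simp: power_int_def v_power v_inverse power_inverse[symmetric])

lemma sum4_nz:
  assumes "x \<noteq> 0" "y1 = 0 \<or> v x < v y1" "y2 = 0 \<or> v x < v y2" "y3 = 0 \<or> v x < v y3"
  shows "x + y1 + y2 + y3 \<noteq> 0"
proof -
  have 1: "x + y1 \<noteq> 0 \<and> v (x + y1) = v x" using v_strict assms(1,2) by blast
  have 2: "x + y1 + y2 \<noteq> 0 \<and> v (x + y1 + y2) = v x" using v_strict[of "x + y1" y2] 1 assms(3) by auto
  show ?thesis using v_strict[of "x + y1 + y2" y3] 2 assms(4) by auto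
qed

lemma min3_cases:
  fixes x y z :: int
  assumes "A \<or> B \<or> C" "x \<noteq> y" "y \<noteq> z" "x \<noteq> z"
  shows "(A \<and> (\<not> B \<or> x < y) \<and> (\<not> C \<or> x < z)) \<or> (B \<and> (\<not> A \<or> y < x) \<and> (\<not> C \<or> y < z))
         \<or> (C \<and> (\<not> A \<or> z < x) \<and> (\<not> B \<or> z < y))"
  using assms by auto

lemma norm_nz:
  fixes a b c w :: 'a
  assumes w: "w \<noteq> 0" "v w = 1" and three: "(3::'a) \<noteq> 0" "v 3 = 0" and nz: "\<not> (a = 0 \<and> b = 0 \<and> c = 0)"
  shows "a ^ 3 + w * b ^ 3 + w ^ 2 * c ^ 3 - 3 * w * a * b * c \<noteq> 0"
proof -
  define T1 where "T1 = a ^ 3"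
  define T2 where "T2 = w * b ^ 3"
  define T3 where "T3 = w ^ 2 * c ^ 3"
  define T4 where "T4 = - (3 * w * a * b * c)"
  have N: "a ^ 3 + w * b ^ 3 + w ^ 2 * c ^ 3 - 3 * w * a * b * c = T1 + T2 + T3 + T4"
    unfolding T1_def T2_def T3_def T4_def by simp
  have v1: "a \<noteq> 0 \<Longrightarrow> T1 \<noteq> 0 \<and> v T1 = 3 * v a" unfolding T1_def by (simp add: v_power)
  have v2: "b \<noteq> 0 \<Longrightarrow> T2 \<noteq> 0 \<and> v T2 = 1 + 3 * v b" unfolding T2_def using w by (simp add: v_power v_mult)
  have v3: "c \<noteq> 0 \<Longrightarrow> T3 \<noteq> 0 \<and> v T3 = 2 + 3 * v c" unfolding T3_def using w by (simp add: v_power v_mult)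
  have v4: "T4 = 0 \<or> (a \<noteq> 0 \<and> b \<noteq> 0 \<and> c \<noteq> 0 \<and> v T4 = 1 + v a + v b + v c)"
  proof (cases "a = 0 \<or> b = 0 \<or> c = 0")
    case True then show ?thesis unfolding T4_def by auto
  next
    case False
    then have "v T4 = 1 + v a + v b + v c" unfolding T4_def using w three
      by (simp add: v_minus v_mult)
    then show ?thesis using False by simp
  qed
  have z: "T1 = 0 \<longleftrightarrow> a = 0" "T2 = 0 \<longleftrightarrow> b = 0" "T3 = 0 \<longleftrightarrow> c = 0"
    unfolding T1_def T2_def T3_def using w by auto
  have d: "3 * v a \<noteq> 1 + 3 * v b" "1 + 3 * v b \<noteq> 2 + 3 * v c" "3 * v a \<noteq> 2 + 3 * v c" by presburger+
  from min3_cases[OF _ d, of "a \<noteq> 0" "b \<noteq> 0" "c \<noteq> 0"] nz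
  consider (c1) "a \<noteq> 0" "b = 0 \<or> 3 * v a < 1 + 3 * v b" "c = 0 \<or> 3 * v a < 2 + 3 * v c"
    | (c2) "b \<noteq> 0" "a = 0 \<or> 1 + 3 * v b < 3 * v a" "c = 0 \<or> 1 + 3 * v b < 2 + 3 * v c"
    | (c3) "c \<noteq> 0" "a = 0 \<or> 2 + 3 * v c < 3 * v a" "b = 0 \<or> 2 + 3 * v c < 1 + 3 * v b"
    by blast
  then show ?thesis
  proof cases
    case c1
    have "T1 + T2 + T3 + T4 \<noteq> 0"
      apply (rule sum4_nz)
      using c1 v1 v2 v3 v4 using z by auto
    then show ?thesis using N by simp
  next
    case c2
    have "T2 + T1 + T3 + T4 \<noteq> 0"
      apply (rule sum4_nz)
      using c2 v1 v2 v3 v4 using z by auto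
    then show ?thesis using N by (simp add: algebra_simps)
  next
    case c3
    have "T3 + T1 + T2 + T4 \<noteq> 0"
      apply (rule sum4_nz)
      using c3 v1 v2 v3 v4 using z by auto
    then show ?thesis using N by (simp add: algebra_simps)
  qed
qed

end

lemma v_three:
  fixes v :: "'a::field_char_0 \<Rightarrow> int"
  assumes pa: "p_adic_field v p" and p3: "p \<noteq> 3"
  shows "v 3 = 0"
proof -
  have dv: "discrete_valuation v" and pr: "prime p" and pI: "of_nat p \<in> val_ideal v"
    using pa unfolding p_adic_field_def by auto
  have "(3::'a) \<in> val_ring v" using R_of_nat[OF dv, of 3] by simp
  then have ge: "v 3 \<ge> 0" unfolding val_ring_def by simp
  have one_notI: "(1::'a) \<notin> val_ideal v" unfolding val_ideal_def using v_one[OF dv] by simp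
  have "\<not> v 3 \<ge> 1"
  proof
    assume "v 3 \<ge> 1"
    then have I3: "(3::'a) \<in> val_ideal v" unfolding val_ideal_def by simp
    have "p mod 3 \<noteq> 0"
    proof
      assume "p mod 3 = 0"
      then have "3 dvd p" by presburger
      then show False using pr p3 unfolding prime_nat_iff by auto
    qed
    then have r: "p mod 3 = 1 \<or> p mod 3 = 2" by presburger
    have "p = (p div 3) * 3 + p mod 3" by simp
    then have "(of_nat p :: 'a) = of_nat (p div 3) * 3 + of_nat (p mod 3)"
      by (metis of_nat_add of_nat_mult of_nat_numeral)
    then have eq: "(of_nat (p mod 3) :: 'a) = of_nat p + - (of_nat (p div 3) * 3)" by simp
    have "(of_nat (p mod 3) :: 'a) \<in> val_ideal v" unfolding eq
      by (intro I_add[OF dv] pI I_minus[OF dv] I_mult[OF dv] R_of_nat[OF dv] I3)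
    then show False
    proof (cases "p mod 3 = 1")
      case True then show False using \<open>of_nat (p mod 3) \<in> val_ideal v\<close> one_notI by simp
    next
      case False
      then have "(2::'a) \<in> val_ideal v" using r \<open>of_nat (p mod 3) \<in> val_ideal v\<close> by simp
      then have "(3::'a) + - 2 \<in> val_ideal v" by (intro I_add[OF dv] I3 I_minus[OF dv])
      then show False using one_notI by simp
    qed
  qed
  then show ?thesis using ge by simp
qed

lemma Fp_det:
  "det (\<chi> i j. a * mat 1 $ i $ j + b * varpi'_mat w $ i $ j + c * (varpi'_mat w ** varpi'_mat w) $ i $ j)
     = a ^ 3 + w * b ^ 3 + w ^ 2 * c ^ 3 - 3 * w * a * b * c"
  by (simp add: det_3 mm_entry0 varpi'_mat_def mat_def) (simp add: algebra_simps power2_eq_square power3_eq_cube)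

definition Fmat :: "'b::field \<Rightarrow> 'b \<Rightarrow> 'b \<Rightarrow> 'b \<Rightarrow> 'b mat3" where
  "Fmat a b c w = (\<chi> i j. a * mat 1 $ i $ j + b * varpi'_mat w $ i $ j + c * (varpi'_mat w ** varpi'_mat w) $ i $ j)"

lemma lam_diag: "((M::'b::field mat3) ** lam_mat w (l1, l2, l3)) $ i $ j
   = M $ i $ j * (if j = 1 then w powi l1 else if j = 2 then w powi l2 else w powi l3)"
  using exhaust_3[of j] by (auto simp: mm_entry0 lam_mat_def)

lemma B0:
  assumes "(w::'b::field) \<noteq> 0"
  shows "Fmat (w powi q) 0 0 w ** lam_mat w (l1, l2, l3)
    = (\<chi> i j. if j = i then w powi (if i = 1 then q + l1 else if i = 2 then q + l2 else q + l3) else 0)"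
  using assms by (simp add: vec_eq_iff forall_3 mm_entry0 Fmat_def mat_def power_int_add lam_mat_def)

lemma B1:
  assumes "(w::'b::field) \<noteq> 0"
  shows "Fmat 0 (w powi q) 0 w ** lam_mat w (l1, l2, l3)
    = (\<chi> i j. if j = (if i = 1 then 3 else if i = 2 then 1 else 2)
         then w powi (if i = 1 then q + 1 + l3 else if i = 2 then q + l1 else q + l2) else 0)"
  using assms by (simp add: vec_eq_iff forall_3 mm_entry0 Fmat_def varpi'_mat_def power_int_add lam_mat_def)

lemma B2:
  assumes "(w::'b::field) \<noteq> 0"
  shows "Fmat 0 0 (w powi q) w ** lam_mat w (l1, l2, l3)
    = (\<chi> i j. if j = (if i = 1 then 2 else if i = 2 then 3 else 1)
         then w powi (if i = 1 then q + 1 + l2 else if i = 2 then q + 1 + l3 else q + l1) else 0)"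
  using assms by (simp add: vec_eq_iff forall_3 mm_entry0 Fmat_def varpi'_mat_def power_int_add lam_mat_def)

definition s1 :: "3 \<Rightarrow> 3" where "s1 i = (if i = 1 then 3 else if i = 2 then 1 else 2)"
definition s2 :: "3 \<Rightarrow> 3" where "s2 i = (if i = 1 then 2 else if i = 2 then 3 else 1)"

lemma inj_s1: "inj s1"
  by (auto simp: inj_def forall_3 s1_def)

lemma inj_s2: "inj s2"
  by (auto simp: inj_def forall_3 s2_def)

lemma target:
  fixes w :: "'b::field" and m :: "3 \<Rightarrow> int"
  assumes w0: "w \<noteq> 0"
  shows "\<exists>lam\<in>Sigma0. \<exists>a b c. \<not> (a = 0 \<and> b = 0 \<and> c = 0) \<and> (\<exists>\<sigma>. inj \<sigma> \<and>
           Fmat a b c w ** lam_mat w lam = (\<chi> i j. if j = \<sigma> i then w powi (m i) else 0))"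
proof -
  define s where "s = m 1 + m 2 + m 3"
  define q where "q = s div 3"
  define r where "r = s mod 3"
  have sr: "s = 3 * q + r" and r3: "r = 0 \<or> r = 1 \<or> r = 2" unfolding q_def r_def by auto
  have wq: "w powi q \<noteq> 0" using w0 by simp
  consider "r = 0" | "r = 1" | "r = 2" using r3 by blast
  then show ?thesis
  proof cases
    case 1
    let ?lam = "(m 1 - q, m 2 - q, m 3 - q)"
    have lamS: "?lam \<in> Sigma0" unfolding Sigma0_def using sr 1 s_def by simp
    have e: "Fmat (w powi q) 0 0 w ** lam_mat w ?lam = (\<chi> i j. if j = id i then w powi (m i) else 0)"
      unfolding B0[OF w0] by (simp add: vec_eq_iff forall_3)
    have "\<not> (w powi q = 0 \<and> (0::'b) = 0 \<and> (0::'b) = 0)" using wq by simp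
    then show ?thesis using lamS e inj_on_id[of UNIV] by blast
  next
    case 2
    let ?lam = "(m 2 - q, m 3 - q, m 1 - q - 1)"
    have lamS: "?lam \<in> Sigma0" unfolding Sigma0_def using sr 2 s_def by simp
    have e: "Fmat 0 (w powi q) 0 w ** lam_mat w ?lam
       = (\<chi> i j. if j = s1 i then w powi (m i) else 0)"
      unfolding B1[OF w0] by (simp add: vec_eq_iff forall_3 s1_def)
    have "\<not> ((0::'b) = 0 \<and> w powi q = 0 \<and> (0::'b) = 0)" using wq by simp
    then show ?thesis using lamS e inj_s1 by blast
  next
    case 3
    let ?lam = "(m 3 - q, m 1 - q - 1, m 2 - q - 1)"
    have lamS: "?lam \<in> Sigma0" unfolding Sigma0_def using sr 3 s_def by simp
    have e: "Fmat 0 0 (w powi q) w ** lam_mat w ?lam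
       = (\<chi> i j. if j = s2 i then w powi (m i) else 0)"
      unfolding B2[OF w0] by (simp add: vec_eq_iff forall_3 s2_def)
    have "\<not> ((0::'b) = 0 \<and> (0::'b) = 0 \<and> w powi q = 0)" using wq by simp
    then show ?thesis using lamS e inj_s2 by blast
  qed
qed

lemma lam_inv:
  assumes "(w::'b::field) \<noteq> 0"
  shows "invertible (lam_mat w lam)"
proof -
  obtain l1 l2 l3 where lam: "lam = (l1, l2, l3)" by (cases lam) auto
  have "lam_mat w (l1, l2, l3) ** lam_mat w (- l1, - l2, - l3) = mat 1"
    using assms by (simp add: vec_eq_iff forall_3 mm_entry0 lam_mat_def mat_def power_int_minus)
  then show ?thesis using lam invertible_right_inverse by blast
qed

theorem lemma9p8:
  fixes v :: "'a::field_char_0 \<Rightarrow> int" and p :: nat and w :: 'a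
  assumes "p_adic_field v p" and "p \<noteq> 2" and "p \<noteq> 3"
    and "uniformizer v w"
  shows "GL3 = (\<Union>lam\<in>Sigma0. {k' ** f ** lam_mat w lam ** k | k' f k.
                   k' \<in> Iwahori v \<and> f \<in> F'_units w \<and> k \<in> Kmax v})"
proof
  have dv: "discrete_valuation v" using assms(1) unfolding p_adic_field_def by simp
  have w0: "w \<noteq> 0" and vw: "v w = 1" using assms(4) unfolding uniformizer_def by auto
  show "GL3 \<subseteq> (\<Union>lam\<in>Sigma0. {k' ** f ** lam_mat w lam ** k | k' f k.
                   k' \<in> Iwahori v \<and> f \<in> F'_units w \<and> k \<in> Kmax v})"
  proof
    fix g :: "'a mat3" assume "g \<in> GL3"
    then have ig: "invertible g" unfolding GL3_def by simp
    have "clean {} g" by (simp add: clean_def)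
    from reduce[OF dv ig this] obtain k1 A k2 P where
      red: "k1 \<in> Iwahori v" "k2 \<in> Kmax v" "g = k1 ** A ** k2" "clean P A" "fst ` P = UNIV" by blast
    from clean_full_mono[OF dv red(4,5)] obtain \<sigma>A where sA: "inj \<sigma>A" "\<forall>i j. A $ i $ j \<noteq> 0 \<longleftrightarrow> j = \<sigma>A i"
      by blast
    define m where "m i = v (A $ i $ \<sigma>A i)" for i
    from target[OF w0, of m] obtain lam a b c \<sigma>B where
      tg: "lam \<in> Sigma0" "\<not> (a = 0 \<and> b = 0 \<and> c = 0)" "inj \<sigma>B"
        "Fmat a b c w ** lam_mat w lam = (\<chi> i j. if j = \<sigma>B i then w powi (m i) else 0)" by blast
    define B where "B = Fmat a b c w ** lam_mat w lam"
    have nzB: "\<forall>i j. B $ i $ j \<noteq> 0 \<longleftrightarrow> j = \<sigma>B i" unfolding B_def tg(4) using w0 by simp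
    have vB: "\<forall>i. v (A $ i $ \<sigma>A i) = v (B $ i $ \<sigma>B i)"
      unfolding B_def tg(4) m_def using v_powi[OF dv w0 vw] by simp
    from mono_compare[OF dv sA(1) tg(3) sA(2) nzB vB] obtain k3 k4 where
      mc: "k3 \<in> Iwahori v" "k4 \<in> Kmax v" "A = k3 ** B ** k4" by blast
    have geq: "g = (k1 ** k3) ** Fmat a b c w ** lam_mat w lam ** (k4 ** k2)"
      using red(3) mc(3) unfolding B_def by (simp add: matrix_mul_assoc)
    have fF: "Fmat a b c w \<in> F'_units w" unfolding F'_units_def Fmat_def using tg(2) by blast
    show "g \<in> (\<Union>lam\<in>Sigma0. {k' ** f ** lam_mat w lam ** k | k' f k.
                   k' \<in> Iwahori v \<and> f \<in> F'_units w \<and> k \<in> Kmax v})"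
      using geq fF tg(1) Iw_mult[OF dv red(1) mc(1)] Kmax_mult[OF dv mc(2) red(2)] by blast
  qed
  show "(\<Union>lam\<in>Sigma0. {k' ** f ** lam_mat w lam ** k | k' f k.
                   k' \<in> Iwahori v \<and> f \<in> F'_units w \<and> k \<in> Kmax v}) \<subseteq> GL3"
  proof
    fix g assume "g \<in> (\<Union>lam\<in>Sigma0. {k' ** f ** lam_mat w lam ** k | k' f k.
                   k' \<in> Iwahori v \<and> f \<in> F'_units w \<and> k \<in> Kmax v})"
    then obtain lam k' f k where g: "g = k' ** f ** lam_mat w lam ** k" "k' \<in> Iwahori v" "f \<in> F'_units w" "k \<in> Kmax v"
      by blast
    obtain a b c where f: "f = Fmat a b c w" "\<not> (a = 0 \<and> b = 0 \<and> c = 0)"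
      using g(3) unfolding F'_units_def Fmat_def by blast
    have v3: "v 3 = 0" using v_three[OF assms(1,3)] .
    have "det f \<noteq> 0" unfolding f(1) Fmat_def Fp_det
      using norm_nz[OF dv w0 vw _ v3 f(2)] by simp
    then have "invertible f" by (simp add: invertible_det_nz)
    moreover have "invertible k'" "invertible k" using g(2,4) unfolding Iwahori_def Kmax_def by auto
    ultimately have "invertible g" unfolding g(1) using lam_inv[OF w0] by (intro invertible_mult) auto
    then show "g \<in> GL3" unfolding GL3_def by simp
  qed
qed

end
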